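(* Let $\mathcal{X}=\{1,\dots,n\}$, let $\pi$ be a strictly positive probability distribution on $\mathcal{X}$, let $P$ be a $\pi$-reversible transition matrix, let $G$ be the Gibbs kernel induced by some partition of $\mathcal{X}$, and let $A_\alpha=\alpha P+(1-\alpha)G$. Then for every integer $l\geq2$ and every $\alpha\in(0,1)$, $$\|A_\alpha^l-\Pi\|_{F,\pi}^2\leq(1-\alpha\gamma^*(P))^{2(l-1)}\|A_\alpha-\Pi\|_{F,\pi}^2.$$
   Context: $\pi$-reversible means $\pi(x)P(x,y)=\pi(y)P(y,x)$. Gibbs kernel of a partition $\bigsqcup_i\mathcal{O}_i$: $G(x,y)=\pi(y)/\pi(\mathcal{O}(x))$ if $y\in\mathcal{O}(x)$ and $0$ otherwise. $\Pi$ is the matrix with every row equal to $\pi$; $\|M\|_{F,\pi}^2=\operatorname{Tr}(M^*M)$ with $M^*(x,y)=\pi(y)M(y,x)/\pi(x)$. For $\pi$-reversible $P$ with eigenvalues $\lambda_1\ge\dots\ge\lambda_n$, $\gamma^*(P)=1-\max\{|\lambda_2(P)|,|\lambda_n(P)|\}$. *)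

theory Defs
  imports "Jordan_Normal_Form.Char_Poly" "HOL-Library.Multiset" "HOL-Library.Disjoint_Sets"
begin

(* State space X = {0..<n} (0-based indices stand for 1..n).
   \<pi> is a vector of dimension n, matrices are n x n real matrices. *)

definition prob_vec :: "nat \<Rightarrow> real vec \<Rightarrow> bool" where
  "prob_vec n \<pi> \<longleftrightarrow> dim_vec \<pi> = n \<and> (\<forall>i<n. \<pi> $ i > 0) \<and> (\<Sum>i<n. \<pi> $ i) = 1"

definition transition_mat :: "nat \<Rightarrow> real mat \<Rightarrow> bool" where
  "transition_mat n P \<longleftrightarrow> P \<in> carrier_mat n n \<and> (\<forall>i<n. \<forall>j<n. P $$ (i,j) \<ge> 0)
     \<and> (\<forall>i<n. (\<Sum>j<n. P $$ (i,j)) = 1)"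

definition reversible :: "nat \<Rightarrow> real vec \<Rightarrow> real mat \<Rightarrow> bool" where
  "reversible n \<pi> P \<longleftrightarrow> (\<forall>x<n. \<forall>y<n. \<pi> $ x * P $$ (x,y) = \<pi> $ y * P $$ (y,x))"

definition block_of :: "nat set set \<Rightarrow> nat \<Rightarrow> nat set" where
  "block_of Q x = (THE B. B \<in> Q \<and> x \<in> B)"

definition gibbs_kernel :: "nat \<Rightarrow> real vec \<Rightarrow> nat set set \<Rightarrow> real mat" where
  "gibbs_kernel n \<pi> Q = mat n n (\<lambda>(x,y).
      if y \<in> block_of Q x then \<pi> $ y / (\<Sum>z\<in>block_of Q x. \<pi> $ z) else 0)"

definition Pi_mat :: "nat \<Rightarrow> real vec \<Rightarrow> real mat" where
  "Pi_mat n \<pi> = mat n n (\<lambda>(x,y). \<pi> $ y)"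

definition adjoint_pi :: "nat \<Rightarrow> real vec \<Rightarrow> real mat \<Rightarrow> real mat" where
  "adjoint_pi n \<pi> M = mat n n (\<lambda>(x,y). \<pi> $ y * M $$ (y,x) / \<pi> $ x)"

definition mtrace :: "nat \<Rightarrow> real mat \<Rightarrow> real" where
  "mtrace n M = (\<Sum>i<n. M $$ (i,i))"

definition frob_sq :: "nat \<Rightarrow> real vec \<Rightarrow> real mat \<Rightarrow> real" where
  "frob_sq n \<pi> M = mtrace n (adjoint_pi n \<pi> M * M)"

(* eigenvalues with multiplicity, in ascending order: lambda_n first, ..., lambda_1 last *)
definition eigs_asc :: "real mat \<Rightarrow> real list" where
  "eigs_asc P = sorted_list_of_multiset (proots (char_poly P))"

definition lambda2 :: "nat \<Rightarrow> real mat \<Rightarrow> real" where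
  "lambda2 n P = eigs_asc P ! (n - 2)"

definition lambda_min :: "nat \<Rightarrow> real mat \<Rightarrow> real" where
  "lambda_min n P = eigs_asc P ! 0"

definition abs_spectral_gap :: "nat \<Rightarrow> real mat \<Rightarrow> real" where
  "abs_spectral_gap n P = 1 - max \<bar>lambda2 n P\<bar> \<bar>lambda_min n P\<bar>"

end

theory Submission
  imports Defs "Jordan_Normal_Form.Spectral_Radius"
begin


definition nsq :: "nat \<Rightarrow> (nat \<Rightarrow> real) \<Rightarrow> (nat \<Rightarrow> real) \<Rightarrow> real" where
  "nsq n w x = (\<Sum>i<n. w i * (x i)\<^sup>2)"

definition ipw :: "nat \<Rightarrow> (nat \<Rightarrow> real) \<Rightarrow> (nat \<Rightarrow> real) \<Rightarrow> (nat \<Rightarrow> real) \<Rightarrow> real" where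
  "ipw n w x y = (\<Sum>i<n. w i * x i * y i)"

definition nrm :: "nat \<Rightarrow> (nat \<Rightarrow> real) \<Rightarrow> (nat \<Rightarrow> real) \<Rightarrow> real" where
  "nrm n w x = sqrt (nsq n w x)"

lemma nsq_nonneg: assumes "\<forall>i<n. w i > 0" shows "nsq n w x \<ge> 0"
  unfolding nsq_def using assms by (intro sum_nonneg) (simp add: less_imp_le)

lemma nsq_ipw: "nsq n w x = ipw n w x x"
  unfolding nsq_def ipw_def by (simp add: power2_eq_square mult.assoc)

lemma nsq_zero: assumes "\<forall>i<n. w i > 0" "nsq n w x = 0" "i < n" shows "x i = 0"
proof -
  have "\<forall>i\<in>{..<n}. w i * (x i)\<^sup>2 = 0"
    using assms(2) unfolding nsq_def
    by (subst sum_nonneg_eq_0_iff[symmetric]) (use assms(1) in \<open>auto simp: less_imp_le\<close>)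
  then have "w i = 0 \<or> x i = 0" using assms(3) by auto
  with assms(1,3) show ?thesis by force
qed

lemma cs_w: assumes "\<forall>i<n. w i > 0"
  shows "(ipw n w x y)\<^sup>2 \<le> nsq n w x * nsq n w y"
proof (cases "nsq n w x = 0")
  case True
  then have "\<forall>i<n. x i = 0" using nsq_zero[OF assms] by blast
  then have "ipw n w x y = 0" unfolding ipw_def by simp
  then show ?thesis using True by simp
next
  case False
  define a where "a = nsq n w x"
  define b where "b = ipw n w x y"
  define t where "t = b / a"
  have apos: "a > 0" using False nsq_nonneg[OF assms, of x] a_def by auto
  have "0 \<le> nsq n w (\<lambda>i. y i - t * x i)" by (rule nsq_nonneg[OF assms])
  also have "nsq n w (\<lambda>i. y i - t * x i) = nsq n w y - 2 * t * b + t\<^sup>2 * a"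
    unfolding nsq_def a_def b_def ipw_def
    by (simp add: power2_eq_square algebra_simps sum.distrib sum_subtractf sum_distrib_left)
  also have "\<dots> = nsq n w y - b\<^sup>2 / a" using apos unfolding t_def
    by (simp add: field_simps power2_eq_square)
  finally have "b\<^sup>2 / a \<le> nsq n w y" by simp
  then have "b\<^sup>2 \<le> nsq n w y * a" using apos by (simp add: field_simps)
  then show ?thesis unfolding a_def b_def by (simp add: mult.commute)
qed

lemma cs_nrm: assumes "\<forall>i<n. w i > 0"
  shows "\<bar>ipw n w x y\<bar> \<le> nrm n w x * nrm n w y"
proof -
  have "\<bar>ipw n w x y\<bar> = sqrt ((ipw n w x y)\<^sup>2)" by simp
  also have "\<dots> \<le> sqrt (nsq n w x * nsq n w y)" using cs_w[OF assms] by (rule real_sqrt_le_mono)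
  also have "\<dots> = nrm n w x * nrm n w y" unfolding nrm_def by (simp add: real_sqrt_mult)
  finally show ?thesis .
qed

lemma nrm_nonneg: "nrm n w x \<ge> 0" if "\<forall>i<n. w i > 0"
  unfolding nrm_def using nsq_nonneg[OF that] by simp

lemma nrm_sq: assumes "\<forall>i<n. w i > 0" shows "(nrm n w x)\<^sup>2 = nsq n w x"
  unfolding nrm_def using nsq_nonneg[OF assms] by simp

lemma nrm_triangle: assumes "\<forall>i<n. w i > 0"
  shows "nrm n w (\<lambda>i. x i + y i) \<le> nrm n w x + nrm n w y"
proof -
  have "nsq n w (\<lambda>i. x i + y i) = nsq n w x + 2 * ipw n w x y + nsq n w y"
    unfolding nsq_def ipw_def
    by (simp add: power2_eq_square algebra_simps sum.distrib sum_distrib_left)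
  also have "\<dots> \<le> (nrm n w x)\<^sup>2 + 2 * (nrm n w x * nrm n w y) + (nrm n w y)\<^sup>2"
    using cs_nrm[OF assms, of x y] nrm_sq[OF assms] by auto
  also have "\<dots> = (nrm n w x + nrm n w y)\<^sup>2" by (simp add: power2_eq_square algebra_simps)
  finally have "sqrt (nsq n w (\<lambda>i. x i + y i)) \<le> sqrt ((nrm n w x + nrm n w y)\<^sup>2)"
    by (rule real_sqrt_le_mono)
  then show ?thesis unfolding nrm_def[of n w "(\<lambda>i. x i + y i)"]
    using nrm_nonneg[OF assms, of x] nrm_nonneg[OF assms, of y] by simp
qed

lemma nrm_scale: "nrm n w (\<lambda>i. c * x i) = \<bar>c\<bar> * nrm n w x"
proof -
  have "nsq n w (\<lambda>i. c * x i) = c\<^sup>2 * nsq n w x"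
    unfolding nsq_def by (simp add: sum_distrib_left power_mult_distrib algebra_simps)
  then show ?thesis unfolding nrm_def by (simp add: real_sqrt_mult)
qed

lemma sorted_ins_max:
  fixes S :: "real multiset"
  assumes "\<forall>x\<in>#S. x \<le> 1"
  shows "sorted_list_of_multiset (add_mset 1 S) = sorted_list_of_multiset S @ [1]"
proof -
  let ?L = "sorted_list_of_multiset S @ [1]"
  have m: "mset ?L = add_mset 1 S" by simp
  have s: "sorted ?L" using assms by (simp add: sorted_append)
  have "sorted_list_of_multiset (add_mset 1 S) = sorted_list_of_multiset (mset ?L)"
    using m by simp
  also have "\<dots> = sort ?L" by (rule sorted_list_of_multiset_mset)
  also have "\<dots> = ?L" using s by (simp add: sorted_sort_id)
  finally show ?thesis .
qed

lemma eig_pos_bounds: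
  fixes S :: "real multiset"
  assumes "\<forall>x\<in>#S. x \<le> 1" "size S = n - 1" "n \<ge> 2" "r \<in># S"
  defines "L \<equiv> sorted_list_of_multiset (add_mset 1 S)"
  shows "L ! 0 \<le> r" "r \<le> L ! (n - 2)"
proof -
  define L' where "L' = sorted_list_of_multiset S"
  have LL: "L = L' @ [1]" unfolding L_def L'_def by (rule sorted_ins_max[OF assms(1)])
  have len: "length L' = n - 1" unfolding L'_def using assms(2)
    by (metis mset_sorted_list_of_multiset size_mset)
  have sL': "sorted L'" unfolding L'_def by simp
  have "r \<in> set L'" unfolding L'_def using assms(4) by simp
  then obtain k where k: "k < length L'" "L' ! k = r" by (auto simp: in_set_conv_nth)
  have "L ! 0 = L' ! 0" using LL len assms(3) by (simp add: nth_append)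
  also have "\<dots> \<le> L' ! k" using sL' k by (intro sorted_nth_mono) auto
  finally show "L ! 0 \<le> r" using k by simp
  have "r \<le> L' ! (n - 2)" 
  proof -
    have "k \<le> n - 2" "n - 2 < length L'" using k len assms(3) by auto
    from sorted_nth_mono[OF sL' this] show ?thesis using k by simp
  qed
  also have "L' ! (n - 2) = L ! (n - 2)" using LL len assms(3) by (simp add: nth_append)
  finally show "r \<le> L ! (n - 2)" .
qed



definition ap :: "nat \<Rightarrow> real mat \<Rightarrow> (nat \<Rightarrow> real) \<Rightarrow> (nat \<Rightarrow> real)" where
  "ap n K v i = (\<Sum>j<n. K $$ (i,j) * v j)"

lemma nsq_cong: "(\<And>i. i < n \<Longrightarrow> x i = y i) \<Longrightarrow> nsq n w x = nsq n w y"
  unfolding nsq_def by (intro sum.cong) auto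
lemma nrm_cong: "(\<And>i. i < n \<Longrightarrow> x i = y i) \<Longrightarrow> nrm n w x = nrm n w y"
  unfolding nrm_def using nsq_cong by metis
lemma ipw_cong: "(\<And>i. i < n \<Longrightarrow> x i = x' i) \<Longrightarrow> (\<And>i. i < n \<Longrightarrow> y i = y' i) \<Longrightarrow>
   ipw n w x y = ipw n w x' y'"
  unfolding ipw_def by (intro sum.cong) auto
lemma ap_cong: "(\<And>i. i < n \<Longrightarrow> x i = y i) \<Longrightarrow> ap n K x = ap n K y"
  unfolding ap_def by (intro ext sum.cong) auto

lemma ap_mult: assumes "K \<in> carrier_mat n n" "L \<in> carrier_mat n n" "i < n"
  shows "ap n (K * L) v i = ap n K (ap n L v) i"
proof -
  have "ap n (K * L) v i = (\<Sum>j<n. (\<Sum>k<n. K $$ (i,k) * L $$ (k,j)) * v j)"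
    unfolding ap_def using assms
    by (intro sum.cong) (auto simp: scalar_prod_def atLeast0LessThan)
  also have "\<dots> = (\<Sum>k<n. K $$ (i,k) * (\<Sum>j<n. L $$ (k,j) * v j))"
    by (simp add: sum_distrib_left sum_distrib_right mult.assoc) (rule sum.swap)
  finally show ?thesis unfolding ap_def .
qed

lemma ap_one: assumes "i < n" shows "ap n (1\<^sub>m n) v i = v i"
proof -
  have "ap n (1\<^sub>m n) v i = (\<Sum>j<n. if i = j then v j else 0)"
    unfolding ap_def using assms by (intro sum.cong) auto
  then show ?thesis using assms by simp
qed

lemma pow_mat_add: assumes "K \<in> carrier_mat n n"
  shows "K ^\<^sub>m (a + b) = K ^\<^sub>m a * K ^\<^sub>m b"
proof (induction b)
  case 0
  then show ?case using assms by simp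
next
  case (Suc b)
  have "K ^\<^sub>m (a + Suc b) = (K ^\<^sub>m a * K ^\<^sub>m b) * K" using Suc by simp
  also have "\<dots> = K ^\<^sub>m a * (K ^\<^sub>m b * K)"
    using assms by (intro assoc_mult_mat[of _ n n _ n _ n]) auto
  finally show ?case by simp
qed

definition wsym :: "nat \<Rightarrow> (nat \<Rightarrow> real) \<Rightarrow> real mat \<Rightarrow> bool" where
  "wsym n w K \<longleftrightarrow> (\<forall>i<n. \<forall>j<n. w i * K $$ (i,j) = w j * K $$ (j,i))"

lemma ipw_ap_sym: assumes "wsym n w K"
  shows "ipw n w (ap n K x) y = ipw n w x (ap n K y)"
proof -
  have "ipw n w (ap n K x) y = (\<Sum>i<n. \<Sum>j<n. w i * K $$ (i,j) * x j * y i)"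
    unfolding ipw_def ap_def by (simp add: sum_distrib_left sum_distrib_right algebra_simps)
  also have "\<dots> = (\<Sum>i<n. \<Sum>j<n. w j * K $$ (j,i) * x j * y i)"
    using assms unfolding wsym_def by (intro sum.cong) auto
  also have "\<dots> = (\<Sum>j<n. \<Sum>i<n. w j * K $$ (j,i) * x j * y i)" by (rule sum.swap)
  also have "\<dots> = ipw n w x (ap n K y)"
    unfolding ipw_def ap_def by (simp add: sum_distrib_left sum_distrib_right algebra_simps)
  finally show ?thesis .
qed

lemma ipw_ap_pow: assumes "wsym n w K" "K \<in> carrier_mat n n"
  shows "ipw n w (ap n (K ^\<^sub>m k) x) y = ipw n w x (ap n (K ^\<^sub>m k) y)"
proof (induction k arbitrary: x y)
  case 0
  have "ipw n w (ap n (K ^\<^sub>m 0) x) y = ipw n w x y"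
    using assms(2) by (intro ipw_cong) (auto simp: ap_one)
  also have "\<dots> = ipw n w x (ap n (K ^\<^sub>m 0) y)"
    using assms(2) by (intro ipw_cong) (auto simp: ap_one)
  finally show ?case .
next
  case (Suc k)
  have "ipw n w (ap n (K ^\<^sub>m Suc k) x) y = ipw n w (ap n (K ^\<^sub>m k) (ap n K x)) y"
    using assms(2) by (intro ipw_cong) (auto simp: ap_mult)
  also have "\<dots> = ipw n w (ap n K x) (ap n (K ^\<^sub>m k) y)" by (rule Suc)
  also have "\<dots> = ipw n w x (ap n K (ap n (K ^\<^sub>m k) y))" by (rule ipw_ap_sym[OF assms(1)])
  also have "\<dots> = ipw n w x (ap n (K ^\<^sub>m Suc k) y)"
  proof (intro ipw_cong)
    fix i assume i: "i < n"
    have "K ^\<^sub>m Suc k = K ^\<^sub>m (1 + k)" by simp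
    also have "\<dots> = K ^\<^sub>m 1 * K ^\<^sub>m k" by (rule pow_mat_add[OF assms(2)])
    also have "K ^\<^sub>m 1 = K" using assms(2) by simp
    finally show "ap n K (ap n (K ^\<^sub>m k) y) i = ap n (K ^\<^sub>m Suc k) y i"
      using ap_mult[OF assms(2) _ i] assms(2) by simp
  qed auto
  finally show ?case .
qed



lemma abs_ap_bound: assumes "\<forall>i<n. \<forall>j<n. \<bar>K $$ (i,j)\<bar> \<le> b" "i < n"
  shows "\<bar>ap n K v i\<bar> \<le> b * (\<Sum>j<n. \<bar>v j\<bar>)"
proof -
  have "\<bar>ap n K v i\<bar> \<le> (\<Sum>j<n. \<bar>K $$ (i,j) * v j\<bar>)" unfolding ap_def by (rule sum_abs)
  also have "\<dots> \<le> (\<Sum>j<n. b * \<bar>v j\<bar>)"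
    using assms by (intro sum_mono) (auto simp: abs_mult intro: mult_right_mono)
  finally show ?thesis by (simp add: sum_distrib_left)
qed

lemma nrm_bound_pointwise: assumes "\<forall>i<n. w i > 0" "\<forall>i<n. \<bar>x i\<bar> \<le> b"
  shows "nrm n w x \<le> sqrt (\<Sum>i<n. w i) * b"
proof -
  have b: "b \<ge> 0" if "n > 0" using assms(2) that by (meson abs_ge_zero order_trans)
  have "nsq n w x \<le> (\<Sum>i<n. w i * b\<^sup>2)" unfolding nsq_def
  proof (intro sum_mono)
    fix i assume "i \<in> {..<n}"
    then have "(x i)\<^sup>2 \<le> b\<^sup>2" using assms(2) by (metis abs_le_square_iff abs_of_nonneg abs_ge_zero lessThan_iff order_trans)
    then show "w i * (x i)\<^sup>2 \<le> w i * b\<^sup>2" using assms(1) \<open>i \<in> {..<n}\<close> by (intro mult_left_mono) auto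
  qed
  also have "\<dots> = (\<Sum>i<n. w i) * b\<^sup>2" by (simp add: sum_distrib_right)
  finally have "sqrt (nsq n w x) \<le> sqrt ((\<Sum>i<n. w i) * b\<^sup>2)" by (rule real_sqrt_le_mono)
  also have "\<dots> = sqrt (\<Sum>i<n. w i) * \<bar>b\<bar>" by (simp add: real_sqrt_mult)
  also have "\<dots> = sqrt (\<Sum>i<n. w i) * b"
  proof (cases "n > 0")
    case True then show ?thesis using b by simp
  next
    case False then show ?thesis by simp
  qed
  finally show ?thesis unfolding nrm_def .
qed

lemma gelfand_step:
  assumes wpos: "\<forall>i<n. w i > 0" and K: "K \<in> carrier_mat n n" and sym: "wsym n w K"
  shows "(nrm n w (ap n (K ^\<^sub>m N) v))\<^sup>2 \<le> nrm n w v * nrm n w (ap n (K ^\<^sub>m (N + N)) v)"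
proof -
  have "(nrm n w (ap n (K ^\<^sub>m N) v))\<^sup>2 = ipw n w (ap n (K ^\<^sub>m N) v) (ap n (K ^\<^sub>m N) v)"
    by (simp add: nrm_sq[OF wpos] nsq_ipw)
  also have "\<dots> = ipw n w v (ap n (K ^\<^sub>m N) (ap n (K ^\<^sub>m N) v))"
    by (rule ipw_ap_pow[OF sym K])
  also have "\<dots> = ipw n w v (ap n (K ^\<^sub>m (N + N)) v)"
  proof (rule ipw_cong)
    fix i assume i: "i < n"
    have "ap n (K ^\<^sub>m (N + N)) v i = ap n (K ^\<^sub>m N * K ^\<^sub>m N) v i"
      by (simp only: pow_mat_add[OF K])
    also have "\<dots> = ap n (K ^\<^sub>m N) (ap n (K ^\<^sub>m N) v) i"
      using K i by (intro ap_mult) auto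
    finally show "ap n (K ^\<^sub>m N) (ap n (K ^\<^sub>m N) v) i = ap n (K ^\<^sub>m (N + N)) v i" by simp
  qed simp
  also have "\<dots> \<le> nrm n w v * nrm n w (ap n (K ^\<^sub>m (N + N)) v)"
    using cs_nrm[OF wpos, of v "ap n (K ^\<^sub>m (N + N)) v"] by linarith
  finally show ?thesis .
qed

lemma gelfand_iter:
  assumes wpos: "\<forall>i<n. w i > 0" and K: "K \<in> carrier_mat n n" and sym: "wsym n w K"
  shows "(nrm n w (ap n K v)) ^ (2 ^ m) \<le> nrm n w v ^ (2 ^ m - 1) * nrm n w (ap n (K ^\<^sub>m (2 ^ m)) v)"
proof (induction m)
  case 0
  have "ap n (K ^\<^sub>m 1) v i = ap n K v i" if "i < n" for i using K by simp
  then have "nrm n w (ap n (K ^\<^sub>m 1) v) = nrm n w (ap n K v)" by (rule nrm_cong)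
  then show ?case by simp
next
  case (Suc m)
  define a where "a = nrm n w (ap n K v)"
  define b where "b = nrm n w v"
  define g where "g = (\<lambda>k. nrm n w (ap n (K ^\<^sub>m k) v))"
  have a0: "a \<ge> 0" and b0: "b \<ge> 0" and g0: "\<And>k. g k \<ge> 0"
    unfolding a_def b_def g_def using nrm_nonneg[OF wpos] by auto
  have IH: "a ^ (2 ^ m) \<le> b ^ (2 ^ m - 1) * g (2 ^ m)" using Suc unfolding a_def b_def g_def .
  have "a ^ (2 ^ Suc m) = a ^ (2 ^ m * 2)" by (simp add: mult.commute)
  also have "\<dots> = (a ^ (2 ^ m))\<^sup>2" by (rule power_mult)
  also have "\<dots> \<le> (b ^ (2 ^ m - 1) * g (2 ^ m))\<^sup>2"
    using IH a0 by (intro power_mono) auto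
  also have "\<dots> = (b ^ (2 ^ m - 1))\<^sup>2 * (g (2 ^ m))\<^sup>2"
    by (rule power_mult_distrib)
  also have "(b ^ (2 ^ m - 1))\<^sup>2 = b ^ ((2 ^ m - 1) * 2)" by (rule power_mult[symmetric])
  also have "b ^ ((2 ^ m - 1) * 2) * (g (2 ^ m))\<^sup>2 \<le> b ^ ((2 ^ m - 1) * 2) * (b * g (2 ^ m + 2 ^ m))"
    using gelfand_step[OF wpos K sym, of "2 ^ m" v] b0 unfolding g_def b_def
    by (intro mult_left_mono) auto
  also have "\<dots> = b ^ (2 ^ Suc m - 1) * g (2 ^ Suc m)"
  proof -
    have p: "(2::nat) ^ m \<ge> 1" by simp
    obtain k where k: "(2::nat) ^ m = Suc k" using p by (metis One_nat_def Suc_le_D)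
    have e1: "(2::nat) ^ Suc m - 1 = Suc ((2 ^ m - 1) * 2)" by (simp add: k)
    have e2: "(2::nat) ^ m + 2 ^ m = 2 ^ Suc m" by simp
    have h1: "b ^ (2 ^ Suc m - 1) = b * b ^ ((2 ^ m - 1) * 2)" by (subst e1) (rule power_Suc)
    have h2: "g (2 ^ Suc m) = g (2 ^ m + 2 ^ m)" by (simp only: e2)
    show ?thesis unfolding h1 h2 by (simp only: ac_simps)
  qed
  finally show ?case unfolding a_def b_def g_def .
qed

lemma gelfand:
  assumes wpos: "\<forall>i<n. w i > 0" and K: "K \<in> carrier_mat n n" and sym: "wsym n w K"
    and mu: "\<mu> \<ge> 0"
    and bnd: "\<And>\<rho>. \<rho> > \<mu> \<Longrightarrow> \<exists>c. \<forall>k i j. i < n \<longrightarrow> j < n \<longrightarrow> \<bar>(K ^\<^sub>m k) $$ (i,j)\<bar> \<le> c * \<rho> ^ k"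
  shows "nrm n w (ap n K v) \<le> \<mu> * nrm n w v"
proof -
  define a where "a = nrm n w (ap n K v)"
  define b where "b = nrm n w v"
  have a0: "a \<ge> 0" and b0: "b \<ge> 0" unfolding a_def b_def using nrm_nonneg[OF wpos] by auto
  have main: "a \<le> \<rho> * b" if rho: "\<rho> > \<mu>" for \<rho>
  proof (rule ccontr)
    assume "\<not> a \<le> \<rho> * b"
    then have gt: "a > \<rho> * b" by simp
    have rpos: "\<rho> > 0" using rho mu by simp
    have bpos: "b > 0"
    proof (rule ccontr)
      assume "\<not> b > 0"
      then have "b = 0" using b0 by simp
      then have "nsq n w v = 0" unfolding b_def nrm_def by simp
      then have "\<forall>i<n. v i = 0" using nsq_zero[OF wpos] by blast
      then have "\<forall>i<n. ap n K v i = 0" unfolding ap_def by simp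
      then have "a = 0" unfolding a_def nrm_def nsq_def by simp
      then show False using gt \<open>b = 0\<close> by simp
    qed
    obtain c where c: "\<forall>k i j. i < n \<longrightarrow> j < n \<longrightarrow> \<bar>(K ^\<^sub>m k) $$ (i,j)\<bar> \<le> c * \<rho> ^ k"
      using bnd[OF rho] by blast
    define B where "B = sqrt (\<Sum>i<n. w i) * (c * (\<Sum>j<n. \<bar>v j\<bar>))"
    have gk: "nrm n w (ap n (K ^\<^sub>m k) v) \<le> B * \<rho> ^ k" for k
    proof -
      have "\<forall>i<n. \<bar>ap n (K ^\<^sub>m k) v i\<bar> \<le> c * \<rho> ^ k * (\<Sum>j<n. \<bar>v j\<bar>)"
        using c by (intro allI impI abs_ap_bound) auto
      from nrm_bound_pointwise[OF wpos this] show ?thesis unfolding B_def by (simp add: algebra_simps)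
    qed
    define q where "q = a / (\<rho> * b)"
    have q1: "q > 1" unfolding q_def using gt rpos bpos by simp
    have qb: "q ^ (2 ^ m) \<le> B / b" for m
    proof -
      define N :: nat where "N = 2 ^ m"
      have N1: "N \<ge> 1" unfolding N_def by simp
      have i1: "a ^ N \<le> b ^ (N - 1) * nrm n w (ap n (K ^\<^sub>m N) v)"
        using gelfand_iter[OF wpos K sym, of v m] unfolding N_def a_def b_def .
      have i2: "b ^ (N - 1) * nrm n w (ap n (K ^\<^sub>m N) v) \<le> b ^ (N - 1) * (B * \<rho> ^ N)"
        using gk[of N] b0 by (intro mult_left_mono) auto
      have "a ^ N * b \<le> (b ^ (N - 1) * (B * \<rho> ^ N)) * b"
        using order_trans[OF i1 i2] bpos by (intro mult_right_mono) auto
      also have "\<dots> = (b ^ (N - 1) * b) * (B * \<rho> ^ N)" by (simp only: ac_simps)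
      also have "b ^ (N - 1) * b = b ^ N" using N1 by (intro power_minus_mult) simp
      finally have i3: "a ^ N * b \<le> b ^ N * (B * \<rho> ^ N)" .
      have pos: "\<rho> ^ N * b ^ N > 0" using rpos bpos by simp
      have "(a / (\<rho> * b)) ^ N = a ^ N / (\<rho> ^ N * b ^ N)" by (simp add: power_divide power_mult_distrib)
      also have "\<dots> \<le> B / b"
        using i3 pos bpos by (simp add: divide_le_eq le_divide_eq mult.commute mult.left_commute)
      finally have "(a / (\<rho> * b)) ^ N \<le> B / b" .
      then show ?thesis unfolding q_def N_def .
    qed
    obtain m where m: "B / b < q ^ m" using real_arch_pow[OF q1] by blast
    have "q ^ m \<le> q ^ (2 ^ m)" using q1 by (intro power_increasing) (auto intro: less_imp_le less_exp)
    then show False using m qb[of m] by simp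
  qed
  show ?thesis
  proof (rule ccontr)
    assume "\<not> nrm n w (ap n K v) \<le> \<mu> * nrm n w v"
    then have gt: "a > \<mu> * b" unfolding a_def b_def by simp
    show False
    proof (cases "b = 0")
      case True
      then show ?thesis using main[of "\<mu> + 1"] gt by simp
    next
      case False
      then have bpos: "b > 0" using b0 by simp
      define \<rho> where "\<rho> = (\<mu> + a / b) / 2"
      have "a / b > \<mu>" using gt bpos by (simp add: field_simps)
      then have r1: "\<rho> > \<mu>" unfolding \<rho>_def by (simp add: field_simps)
      have aux: "\<And>t::real. \<mu> < t \<Longrightarrow> (\<mu> + t) / 2 < t" by (simp add: field_simps)
      have r2: "\<rho> < a / b" using aux[OF \<open>a / b > \<mu>\<close>] unfolding \<rho>_def .
      from r1 r2 show False using main[of \<rho>] bpos by (simp add: field_simps)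
    qed
  qed
qed



lemma eig_real:
  fixes K :: "real mat" and v :: "complex vec" and lam :: complex
  assumes K: "K \<in> carrier_mat n n" and wpos: "\<forall>i<n. w i > 0" and sym: "wsym n w K"
    and ev: "eigenvector (map_mat complex_of_real K) v lam"
  shows "Im lam = 0"
proof -
  let ?KC = "map_mat complex_of_real K"
  from ev K have v: "v \<in> carrier_vec n" and v0: "v \<noteq> 0\<^sub>v n" and eq: "?KC *\<^sub>v v = lam \<cdot>\<^sub>v v"
    unfolding eigenvector_def by auto
  have row: "(\<Sum>j<n. of_real (K $$ (i,j)) * v $ j) = lam * v $ i" if i: "i < n" for i
  proof -
    have "(?KC *\<^sub>v v) $ i = (lam \<cdot>\<^sub>v v) $ i" using eq by simp
    also have "\<dots> = lam * v $ i" using v i by simp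
    also have "(?KC *\<^sub>v v) $ i = (\<Sum>j<n. of_real (K $$ (i,j)) * v $ j)"
      using K v i by (simp add: scalar_prod_def atLeast0LessThan)
    finally show ?thesis .
  qed
  define f where "f = (\<lambda>i j. complex_of_real (w i * K $$ (i,j)) * (cnj (v $ i) * v $ j))"
  define S where "S = (\<Sum>i<n. \<Sum>j<n. f i j)"
  define D where "D = (\<Sum>i<n. w i * (cmod (v $ i))\<^sup>2)"
  have "S = (\<Sum>i<n. of_real (w i) * cnj (v $ i) * (\<Sum>j<n. of_real (K $$ (i,j)) * v $ j))"
    unfolding S_def f_def by (simp add: sum_distrib_left algebra_simps)
  also have "\<dots> = (\<Sum>i<n. lam * of_real (w i * (cmod (v $ i))\<^sup>2))"
  proof (intro sum.cong refl)
    fix i assume "i \<in> {..<n}"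
    then have "(\<Sum>j<n. of_real (K $$ (i,j)) * v $ j) = lam * v $ i" using row by simp
    moreover have "v $ i * cnj (v $ i) = of_real ((cmod (v $ i))\<^sup>2)" by (rule complex_norm_square[symmetric])
    ultimately show "of_real (w i) * cnj (v $ i) * (\<Sum>j<n. of_real (K $$ (i,j)) * v $ j) =
        lam * of_real (w i * (cmod (v $ i))\<^sup>2)"
      by (simp add: algebra_simps)
  qed
  also have "\<dots> = lam * of_real D" unfolding D_def by (simp add: sum_distrib_left)
  finally have S1: "S = lam * of_real D" .
  have "cnj S = (\<Sum>i<n. \<Sum>j<n. f j i)"
    unfolding S_def f_def cnj_sum
  proof (intro sum.cong refl)
    fix i j assume "i \<in> {..<n}" "j \<in> {..<n}"
    then have "w i * K $$ (i,j) = w j * K $$ (j,i)" using sym unfolding wsym_def by auto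
    then show "cnj (complex_of_real (w i * K $$ (i, j)) * (cnj (v $ i) * v $ j)) =
      complex_of_real (w j * K $$ (j, i)) * (cnj (v $ j) * v $ i)" by (simp add: algebra_simps)
  qed
  also have "\<dots> = S" unfolding S_def by (rule sum.swap)
  finally have "cnj S = S" .
  then have imS: "Im S = 0" by (metis complex_cnj_cancel_iff complex_cnj_zero_iff complex_eq_cancel_iff2 cnj.simps(2) neg_equal_zero)
  have "\<exists>i<n. v $ i \<noteq> 0"
  proof (rule ccontr)
    assume "\<not> (\<exists>i<n. v $ i \<noteq> 0)"
    then have "v = 0\<^sub>v n" using v by (intro eq_vecI) auto
    then show False using v0 by simp
  qed
  then obtain i0 where i0: "i0 < n" "v $ i0 \<noteq> 0" by blast
  have "D \<ge> w i0 * (cmod (v $ i0))\<^sup>2" unfolding D_def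
    using i0 wpos by (intro member_le_sum) (auto intro!: mult_nonneg_nonneg simp: less_imp_le)
  moreover have "w i0 * (cmod (v $ i0))\<^sup>2 > 0" using i0 wpos by auto
  ultimately have Dpos: "D > 0" by linarith
  have "Im S = Im lam * D" unfolding S1 by simp
  then show ?thesis using imS Dpos by simp
qed

lemma stoch_eig_le1:
  fixes P :: "real mat"
  assumes P: "transition_mat n P" and ev: "eigenvector P v r"
  shows "\<bar>r\<bar> \<le> 1"
proof -
  from P have Pc: "P \<in> carrier_mat n n" and nn: "\<forall>i<n. \<forall>j<n. P $$ (i,j) \<ge> 0"
    and rs: "\<forall>i<n. (\<Sum>j<n. P $$ (i,j)) = 1" unfolding transition_mat_def by auto
  from ev Pc have v: "v \<in> carrier_vec n" and v0: "v \<noteq> 0\<^sub>v n" and eq: "P *\<^sub>v v = r \<cdot>\<^sub>v v"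
    unfolding eigenvector_def by auto
  have "\<exists>i<n. v $ i \<noteq> 0"
  proof (rule ccontr)
    assume "\<not> (\<exists>i<n. v $ i \<noteq> 0)"
    then have "v = 0\<^sub>v n" using v by (intro eq_vecI) auto
    then show False using v0 by simp
  qed
  then obtain i1 where i1: "i1 < n" "v $ i1 \<noteq> 0" by blast
  define m where "m = Max ((\<lambda>i. \<bar>v $ i\<bar>) ` {..<n})"
  have "m \<in> (\<lambda>i. \<bar>v $ i\<bar>) ` {..<n}" unfolding m_def using i1 by (intro Max_in) auto
  then obtain i0 where i0: "i0 < n" "m = \<bar>v $ i0\<bar>" by auto
  have mx: "\<bar>v $ i\<bar> \<le> m" if "i < n" for i unfolding m_def using that by (intro Max_ge) auto
  have mpos: "m > 0" using mx[OF i1(1)] i1(2) by linarith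
  have "r * v $ i0 = (P *\<^sub>v v) $ i0" using eq v i0 by simp
  also have "\<dots> = (\<Sum>j<n. P $$ (i0,j) * v $ j)"
    using Pc v i0 by (simp add: scalar_prod_def atLeast0LessThan)
  finally have e: "r * v $ i0 = (\<Sum>j<n. P $$ (i0,j) * v $ j)" .
  have "\<bar>r\<bar> * m = \<bar>r * v $ i0\<bar>" using i0 by (simp add: abs_mult)
  also have "\<dots> = \<bar>\<Sum>j<n. P $$ (i0,j) * v $ j\<bar>" using e by simp
  also have "\<dots> \<le> (\<Sum>j<n. \<bar>P $$ (i0,j) * v $ j\<bar>)" by (rule sum_abs)
  also have "\<dots> \<le> (\<Sum>j<n. P $$ (i0,j) * m)"
    using nn i0 mx by (intro sum_mono) (auto simp: abs_mult intro: mult_left_mono)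
  also have "\<dots> = m" using rs i0 by (simp add: sum_distrib_right[symmetric])
  finally show ?thesis using mpos by simp
qed



definition Tm :: "nat \<Rightarrow> real mat" where
  "Tm n = mat n n (\<lambda>(i,j). if j = 0 then 1 else if i = j then 1 else 0)"
definition Tinv :: "nat \<Rightarrow> real mat" where
  "Tinv n = mat n n (\<lambda>(i,j). if i = j then 1 else if j = 0 then -1 else 0)"

lemma Tm_dims[simp]: "dim_row (Tm n) = n" "dim_col (Tm n) = n" unfolding Tm_def by simp_all
lemma Tinv_dims[simp]: "dim_row (Tinv n) = n" "dim_col (Tinv n) = n" unfolding Tinv_def by simp_all
lemma Tm_carrier[simp]: "Tm n \<in> carrier_mat n n" unfolding Tm_def by simp
lemma Tinv_carrier[simp]: "Tinv n \<in> carrier_mat n n" unfolding Tinv_def by simp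

lemma XT_entry: assumes X: "X \<in> carrier_mat n n" and k: "k < n" and j: "j < n"
  shows "(X * Tm n) $$ (k,j) = (if j = 0 then (\<Sum>m<n. X $$ (k,m)) else X $$ (k,j))"
proof -
  have "(X * Tm n) $$ (k,j) = (\<Sum>m<n. X $$ (k,m) * Tm n $$ (m,j))"
    using X k j by (simp add: scalar_prod_def atLeast0LessThan)
  also have "\<dots> = (if j = 0 then (\<Sum>m<n. X $$ (k,m)) else X $$ (k,j))"
  proof (cases "j = 0")
    case True then show ?thesis unfolding Tm_def using j by (auto intro!: sum.cong)
  next
    case False
    have "(\<Sum>m<n. X $$ (k,m) * Tm n $$ (m,j)) = (\<Sum>m<n. if m = j then X $$ (k,m) else 0)"
      unfolding Tm_def using j False by (intro sum.cong) auto
    then show ?thesis using False j by simp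
  qed
  finally show ?thesis .
qed

lemma TiY_entry: assumes Y: "Y \<in> carrier_mat n n" and i: "i < n" and j: "j < n"
  shows "(Tinv n * Y) $$ (i,j) = (if i = 0 then Y $$ (0,j) else Y $$ (i,j) - Y $$ (0,j))"
proof -
  have n0: "0 < n" using i by simp
  have "(Tinv n * Y) $$ (i,j) = (\<Sum>k<n. Tinv n $$ (i,k) * Y $$ (k,j))"
    using Y i j by (simp add: scalar_prod_def atLeast0LessThan)
  also have "\<dots> = (\<Sum>k<n. (if k = i then Y $$ (i,j) else 0) - (if k = 0 \<and> i \<noteq> 0 then Y $$ (0,j) else 0))"
    unfolding Tinv_def using i by (intro sum.cong) auto
  also have "\<dots> = (if i = 0 then Y $$ (0,j) else Y $$ (i,j) - Y $$ (0,j))"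
    using i n0 by (simp add: sum_subtractf)
  finally show ?thesis .
qed

lemma Tinv_Tm: "Tinv n * Tm n = 1\<^sub>m n"
proof (rule eq_matI)
  fix i j assume i: "i < dim_row (1\<^sub>m n)" and j: "j < dim_col (1\<^sub>m n)"
  then have i: "i < n" and j: "j < n" by auto
  show "(Tinv n * Tm n) $$ (i,j) = 1\<^sub>m n $$ (i,j)"
    using TiY_entry[OF Tm_carrier i j] i j unfolding Tm_def by auto
qed auto

lemma Tm_Tinv: "Tm n * Tinv n = 1\<^sub>m n"
  by (rule mat_mult_left_right_inverse[OF Tinv_carrier Tm_carrier Tinv_Tm])

lemma char_poly_rowsum:
  fixes X :: "real mat"
  assumes X: "X \<in> carrier_mat n n" and n: "n > 0" and rs: "\<forall>i<n. (\<Sum>j<n. X $$ (i,j)) = s"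
  shows "char_poly X = [:-s, 1:] * char_poly (mat (n-1) (n-1) (\<lambda>(i,j). X $$ (i+1,j+1) - X $$ (0,j+1)))"
proof -
  define B where "B = Tinv n * X * Tm n"
  define C where "C = mat (n-1) (n-1) (\<lambda>(i,j). X $$ (i+1,j+1) - X $$ (0,j+1))"
  define A1 where "A1 = mat 1 1 (\<lambda>_. s)"
  define A2 where "A2 = mat 1 (n-1) (\<lambda>(_,j). X $$ (0,j+1))"
  have sim: "similar_mat_wit B X (Tinv n) (Tm n)"
    unfolding similar_mat_wit_def Let_def B_def using X Tinv_Tm Tm_Tinv by auto
  then have "similar_mat B X" unfolding similar_mat_def by blast
  then have cpB: "char_poly B = char_poly X" by (rule char_poly_similar)
  have Bassoc: "B = Tinv n * (X * Tm n)" unfolding B_def using X by (intro assoc_mult_mat) auto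
  have Bent: "B $$ (i,j) = (if i = 0 then (if j = 0 then s else X $$ (0,j))
       else (if j = 0 then 0 else X $$ (i,j) - X $$ (0,j)))" if i: "i < n" and j: "j < n" for i j
  proof -
    have XT: "X * Tm n \<in> carrier_mat n n" using X by simp
    have "B $$ (i,j) = (if i = 0 then (X * Tm n) $$ (0,j) else (X * Tm n) $$ (i,j) - (X * Tm n) $$ (0,j))"
      unfolding Bassoc by (rule TiY_entry[OF XT i j])
    then show ?thesis using XT_entry[OF X _ j] i n rs by auto
  qed
  have Bblock: "B = four_block_mat A1 A2 (0\<^sub>m (n-1) 1) C"
  proof (rule eq_matI)
    have dB: "dim_row B = n" "dim_col B = n" unfolding B_def using X by auto
    show "dim_row B = dim_row (four_block_mat A1 A2 (0\<^sub>m (n-1) 1) C)"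
      "dim_col B = dim_col (four_block_mat A1 A2 (0\<^sub>m (n-1) 1) C)"
      using dB n unfolding A1_def C_def by auto
    fix i j assume "i < dim_row (four_block_mat A1 A2 (0\<^sub>m (n-1) 1) C)"
      "j < dim_col (four_block_mat A1 A2 (0\<^sub>m (n-1) 1) C)"
    then have i: "i < n" and j: "j < n" using n unfolding A1_def C_def by auto
    show "B $$ (i,j) = four_block_mat A1 A2 (0\<^sub>m (n-1) 1) C $$ (i,j)"
      using Bent[OF i j] i j n unfolding A1_def A2_def C_def by auto
  qed
  have "char_poly B = char_poly A1 * char_poly C"
    unfolding Bblock by (rule char_poly_four_block_zeros_col) (auto simp: A1_def A2_def C_def)
  also have "char_poly A1 = [:-s, 1:]"
    by (simp add: A1_def char_poly_defs det_def sign_def)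
  finally show ?thesis using cpB unfolding C_def by simp
qed



lemma prod_real_roots:
  assumes "\<forall>a\<in>set as. Im a = 0"
  shows "(\<Prod>a\<leftarrow>as. [:-a, 1:]) = map_poly complex_of_real (\<Prod>a\<leftarrow>as. [:-Re a, 1:])"
  using assms
proof (induction as)
  case Nil
  then show ?case by simp
next
  case (Cons a as)
  interpret mp: map_poly_inj_comm_ring_hom "complex_of_real" ..
  have a: "a = complex_of_real (Re a)" using Cons.prems by (simp add: complex_eq_iff)
  have h: "map_poly complex_of_real [:-Re a, 1:] = [:-a, 1:]" by (subst a) simp
  have IH: "(\<Prod>a\<leftarrow>as. [:-a, 1:]) = map_poly complex_of_real (\<Prod>a\<leftarrow>as. [:-Re a, 1:])"
    using Cons by simp
  have "(\<Prod>a\<leftarrow>a # as. [:-a, 1:]) = [:-a, 1:] * (\<Prod>a\<leftarrow>as. [:-a, 1:])" by simp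
  also have "\<dots> = map_poly complex_of_real [:-Re a, 1:] * map_poly complex_of_real (\<Prod>a\<leftarrow>as. [:-Re a, 1:])"
    by (simp only: h IH)
  also have "\<dots> = map_poly complex_of_real ([:-Re a, 1:] * (\<Prod>a\<leftarrow>as. [:-Re a, 1:]))"
    by (rule mp.hom_mult[symmetric])
  also have "[:-Re a, 1:] * (\<Prod>a\<leftarrow>as. [:-Re a, 1:]) = (\<Prod>a\<leftarrow>a # as. [:-Re a, 1:])" by simp
  finally show ?case .
qed

lemma proots_lin_prod: "proots (\<Prod>r\<leftarrow>rs. [:-r, 1:]) = mset (rs :: real list)"
proof (induction rs)
  case Nil
  then show ?case by simp
next
  case (Cons r rs)
  have nz: "(\<Prod>r\<leftarrow>rs. [:-r, 1:]) \<noteq> (0 :: real poly)" by (auto simp: prod_list_zero_iff)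
  have e: "(\<Prod>r\<leftarrow>r # rs. [:-r, 1:]) = [:-r, 1:] * (\<Prod>r\<leftarrow>rs. [:-r, 1:])" by simp
  have "proots ([:-r, 1:] * (\<Prod>r\<leftarrow>rs. [:-r, 1:])) = proots [:-r, 1:] + proots (\<Prod>r\<leftarrow>rs. [:-r, 1:])"
    by (rule proots_mult) (use nz in auto)
  then have "proots (\<Prod>r\<leftarrow>r # rs. [:-r, 1:]) = proots [:-r, 1:] + proots (\<Prod>r\<leftarrow>rs. [:-r, 1:])"
    unfolding e .
  also have "proots [:-r, 1:] = {#r#}" using proots_linear_factor[of "-r"] by simp
  finally show ?case using Cons by simp
qed

lemma pow_smult_mat: fixes K :: "real mat" assumes "K \<in> carrier_mat n n"
  shows "(c \<cdot>\<^sub>m K) ^\<^sub>m k = c ^ k \<cdot>\<^sub>m (K ^\<^sub>m k)"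
proof (induction k)
  case 0
  then show ?case using assms by (auto intro!: eq_matI)
next
  case (Suc k)
  have "(c \<cdot>\<^sub>m K) ^\<^sub>m Suc k = (c ^ k \<cdot>\<^sub>m (K ^\<^sub>m k)) * (c \<cdot>\<^sub>m K)" using Suc by simp
  also have "\<dots> = c ^ k \<cdot>\<^sub>m ((K ^\<^sub>m k) * (c \<cdot>\<^sub>m K))"
    using assms by (intro mult_smult_assoc_mat) auto
  also have "(K ^\<^sub>m k) * (c \<cdot>\<^sub>m K) = c \<cdot>\<^sub>m ((K ^\<^sub>m k) * K)"
    using assms by (intro mult_smult_distrib) auto
  finally show ?case by (auto intro!: eq_matI simp: ac_simps)
qed



lemma spectral_main:
  fixes n :: nat and \<pi> :: "real vec" and P :: "real mat"
  assumes pv: "prob_vec n \<pi>" and tm: "transition_mat n P" and rev: "reversible n \<pi> P"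
  defines "w \<equiv> (\<lambda>i. \<pi> $ i)" and "M \<equiv> P - Pi_mat n \<pi>"
    and "\<mu> \<equiv> max \<bar>lambda2 n P\<bar> \<bar>lambda_min n P\<bar>"
  shows "nrm n w (ap n M v) \<le> \<mu> * nrm n w v"
proof -
  interpret mp: map_poly_inj_comm_ring_hom "complex_of_real" ..
  have wpos: "\<forall>i<n. w i > 0" and sum1: "(\<Sum>i<n. w i) = 1"
    using pv unfolding prob_vec_def w_def by auto
  have n0: "n > 0" using sum1 by (cases n) auto
  have Pc: "P \<in> carrier_mat n n" and rsP: "\<forall>i<n. (\<Sum>j<n. P $$ (i,j)) = 1"
    using tm unfolding transition_mat_def by auto
  have Mc: "M \<in> carrier_mat n n" unfolding M_def Pi_mat_def using Pc by auto
  have Ment: "M $$ (i,j) = P $$ (i,j) - w j" if "i < n" "j < n" for i j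
    unfolding M_def Pi_mat_def w_def using that Pc by auto
  have symP: "wsym n w P" using rev unfolding wsym_def reversible_def w_def by auto
  have symM: "wsym n w M" unfolding wsym_def
  proof (intro allI impI)
    fix i j assume ij: "i < n" "j < n"
    have e1: "M $$ (i,j) = P $$ (i,j) - w j" and e2: "M $$ (j,i) = P $$ (j,i) - w i"
      using Ment ij by auto
    have e3: "w i * P $$ (i,j) = w j * P $$ (j,i)" using symP ij unfolding wsym_def by auto
    show "w i * M $$ (i,j) = w j * M $$ (j,i)"
      unfolding e1 e2 using e3 by (simp add: algebra_simps)
  qed
  have rsM: "\<forall>i<n. (\<Sum>j<n. M $$ (i,j)) = 0"
  proof (intro allI impI)
    fix i assume i: "i < n"
    have "(\<Sum>j<n. M $$ (i,j)) = (\<Sum>j<n. P $$ (i,j) - w j)" using Ment i by simp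
    also have "\<dots> = 0" using rsP i sum1 by (simp add: sum_subtractf)
    finally show "(\<Sum>j<n. M $$ (i,j)) = 0" .
  qed
  define C where "C = mat (n-1) (n-1) (\<lambda>(i,j). P $$ (i+1,j+1) - P $$ (0,j+1))"
  have cpP: "char_poly P = [:-1, 1:] * char_poly C"
    unfolding C_def by (rule char_poly_rowsum[OF Pc n0 rsP])
  have CM: "mat (n-1) (n-1) (\<lambda>(i,j). M $$ (i+1,j+1) - M $$ (0,j+1)) = C"
    unfolding C_def by (rule eq_matI) (use n0 Ment in auto)
  have cpM: "char_poly M = [:0, 1:] * char_poly C"
    using char_poly_rowsum[OF Mc n0 rsM] unfolding CM by simp
  have cpP0: "char_poly P \<noteq> 0" using degree_monic_char_poly[OF Pc] by auto
  have cpC0: "char_poly C \<noteq> 0" using cpP0 cpP by auto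
  define S where "S = proots (char_poly C)"
  have prootsP: "proots (char_poly P) = add_mset 1 S"
  proof -
    have "proots (char_poly P) = proots [:-1, 1:] + proots (char_poly C)"
      unfolding cpP by (rule proots_mult) (use cpC0 in auto)
    also have "proots [:-1, 1:] = {#(1::real)#}" using proots_linear_factor[of "-1::real"] by simp
    finally show ?thesis unfolding S_def by simp
  qed
  let ?PC = "map_mat complex_of_real P"
  have PCc: "?PC \<in> carrier_mat n n" using Pc by simp
  obtain as where cpPC: "char_poly ?PC = (\<Prod>a\<leftarrow>as. [:-a, 1:])" and las: "length as = n"
    using char_poly_factorized[OF PCc] by blast
  have hom: "char_poly ?PC = map_poly complex_of_real (char_poly P)"
    by (rule of_real_hom.char_poly_hom[OF Pc])
  have asreal: "\<forall>a\<in>set as. Im a = 0"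
  proof
    fix a assume a: "a \<in> set as"
    have "poly (char_poly ?PC) a = 0" unfolding cpPC by (rule linear_poly_root[OF a])
    then have "eigenvalue ?PC a" using eigenvalue_root_char_poly[OF PCc] by simp
    then obtain v where "eigenvector ?PC v a" unfolding eigenvalue_def by blast
    then show "Im a = 0" by (rule eig_real[OF Pc wpos symP])
  qed
  have "map_poly complex_of_real (char_poly P) = map_poly complex_of_real (\<Prod>a\<leftarrow>as. [:-Re a, 1:])"
    using hom cpPC prod_real_roots[OF asreal] by simp
  then have cpPprod: "char_poly P = (\<Prod>r\<leftarrow>map Re as. [:-r, 1:])" by (simp add: o_def)
  have sizeP: "size (proots (char_poly P)) = n" unfolding cpPprod proots_lin_prod using las by simp
  have sizeS: "size S = n - 1" using sizeP prootsP by simp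
  have rootsle: "\<forall>x\<in>#proots (char_poly P). x \<le> 1"
  proof
    fix x assume "x \<in># proots (char_poly P)"
    then have "poly (char_poly P) x = 0" using cpP0 by simp
    then have "eigenvalue P x" using eigenvalue_root_char_poly[OF Pc] by simp
    then obtain v where "eigenvector P v x" unfolding eigenvalue_def by blast
    from stoch_eig_le1[OF tm this] show "x \<le> 1" by simp
  qed
  then have Sle: "\<forall>x\<in>#S. x \<le> 1" unfolding prootsP by simp
  have eigs: "eigs_asc P = sorted_list_of_multiset (add_mset 1 S)"
    unfolding eigs_asc_def prootsP ..
  have mu0: "\<mu> \<ge> 0" unfolding \<mu>_def by simp
  let ?MC = "map_mat complex_of_real M"
  have MCc: "?MC \<in> carrier_mat n n" using Mc by simp
  have evbound: "cmod lam \<le> \<mu>" if ev: "eigenvalue ?MC lam" for lam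
  proof -
    obtain v where "eigenvector ?MC v lam" using ev unfolding eigenvalue_def by blast
    then have im: "Im lam = 0" by (rule eig_real[OF Mc wpos symM])
    define r where "r = Re lam"
    have lr: "lam = complex_of_real r" unfolding r_def using im by (simp add: complex_eq_iff)
    have "poly (char_poly ?MC) lam = 0" using ev eigenvalue_root_char_poly[OF MCc] by simp
    then have "poly (map_poly complex_of_real (char_poly M)) (complex_of_real r) = 0"
      unfolding of_real_hom.char_poly_hom[OF Mc] lr .
    then have "poly (char_poly M) r = 0" by simp
    then have "r * poly (char_poly C) r = 0" unfolding cpM by simp
    then consider "r = 0" | "poly (char_poly C) r = 0" by auto
    then show ?thesis
    proof cases
      case 1 then show ?thesis using mu0 lr by simp
    next
      case 2
      then have rS: "r \<in># S" unfolding S_def using cpC0 by simp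
      then have n2: "n \<ge> 2" using sizeS by (cases "n - 1") auto
      have b1: "eigs_asc P ! 0 \<le> r" unfolding eigs by (rule eig_pos_bounds(1)[OF Sle sizeS n2 rS])
      have b2: "r \<le> eigs_asc P ! (n - 2)" unfolding eigs by (rule eig_pos_bounds(2)[OF Sle sizeS n2 rS])
      have "\<bar>r\<bar> \<le> \<mu>" unfolding \<mu>_def lambda2_def lambda_min_def using b1 b2 by linarith
      then show ?thesis using lr by simp
    qed
  qed
  have powbound: "\<exists>c. \<forall>k i j. i < n \<longrightarrow> j < n \<longrightarrow> \<bar>(M ^\<^sub>m k) $$ (i,j)\<bar> \<le> c * \<rho> ^ k"
    if rho: "\<rho> > \<mu>" for \<rho>
  proof -
    have rpos: "\<rho> > 0" using rho mu0 by simp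
    define A where "A = map_mat complex_of_real ((1 / \<rho>) \<cdot>\<^sub>m M)"
    have Ac: "A \<in> carrier_mat n n" unfolding A_def using Mc by simp
    have evA: "cmod lam < 1" if ev: "eigenvalue A lam" for lam
    proof -
      obtain v where evv: "eigenvector A v lam" using ev unfolding eigenvalue_def by blast
      then have v: "v \<in> carrier_vec n" and v0: "v \<noteq> 0\<^sub>v n" and eq: "A *\<^sub>v v = lam \<cdot>\<^sub>v v"
        using Ac unfolding eigenvector_def by auto
      have "?MC *\<^sub>v v = (complex_of_real \<rho> * lam) \<cdot>\<^sub>v v"
      proof (rule eq_vecI)
        fix i assume "i < dim_vec ((complex_of_real \<rho> * lam) \<cdot>\<^sub>v v)"
        then have i: "i < n" using v by simp
        have "(A *\<^sub>v v) $ i = lam * v $ i" using eq v i by (metis carrier_vecD index_smult_vec(1))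
        moreover have "(A *\<^sub>v v) $ i = complex_of_real (1 / \<rho>) * (?MC *\<^sub>v v) $ i"
          unfolding A_def using Mc v i
          by (simp add: scalar_prod_def sum_distrib_left algebra_simps)
        ultimately have "(?MC *\<^sub>v v) $ i = complex_of_real \<rho> * (lam * v $ i)"
          using rpos by (simp add: field_simps)
        then show "(?MC *\<^sub>v v) $ i = ((complex_of_real \<rho> * lam) \<cdot>\<^sub>v v) $ i"
          using v i by simp
      qed (use v Mc in auto)
      then have "eigenvector ?MC v (complex_of_real \<rho> * lam)"
        using v v0 Mc unfolding eigenvector_def by auto
      then have "eigenvalue ?MC (complex_of_real \<rho> * lam)" unfolding eigenvalue_def by blast
      then have "cmod (complex_of_real \<rho> * lam) \<le> \<mu>" by (rule evbound)
      then have "\<rho> * cmod lam \<le> \<mu>" using rpos by (simp add: norm_mult)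
      then have "\<rho> * cmod lam < \<rho>" using rho by simp
      then show ?thesis using rpos by simp
    qed
    have "spectral_radius A \<in> norm ` spectrum A" by (rule spectral_radius_mem_max(1)[OF Ac n0])
    then obtain lam where "lam \<in> spectrum A" "spectral_radius A = norm lam" by auto
    then have sr: "spectral_radius A < 1" using evA unfolding spectrum_def by simp
    obtain c where c: "\<forall>k. norm_bound (A ^\<^sub>m k) c"
      using spectral_radius_jnf_norm_bound_less_1_upper_triangular[OF Ac sr] by blast
    have "\<forall>k i j. i < n \<longrightarrow> j < n \<longrightarrow> \<bar>(M ^\<^sub>m k) $$ (i,j)\<bar> \<le> c * \<rho> ^ k"
    proof (intro allI impI)
      fix k i j assume i: "i < n" and j: "j < n"
      have SMc: "(1 / \<rho>) \<cdot>\<^sub>m M \<in> carrier_mat n n" using Mc by simp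
      have "A ^\<^sub>m k = map_mat complex_of_real (((1 / \<rho>) \<cdot>\<^sub>m M) ^\<^sub>m k)"
        unfolding A_def by (rule of_real_hom.mat_hom_pow[OF SMc, symmetric])
      also have "((1 / \<rho>) \<cdot>\<^sub>m M) ^\<^sub>m k = (1 / \<rho>) ^ k \<cdot>\<^sub>m (M ^\<^sub>m k)" by (rule pow_smult_mat[OF Mc])
      finally have Ak: "A ^\<^sub>m k = map_mat complex_of_real ((1 / \<rho>) ^ k \<cdot>\<^sub>m (M ^\<^sub>m k))" .
      have "norm ((A ^\<^sub>m k) $$ (i,j)) \<le> c" using c i j Ac unfolding norm_bound_def by auto
      also have "(A ^\<^sub>m k) $$ (i,j) = complex_of_real ((1 / \<rho>) ^ k * (M ^\<^sub>m k) $$ (i,j))"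
        unfolding Ak using i j Mc by simp
      finally have "norm (complex_of_real ((1 / \<rho>) ^ k * (M ^\<^sub>m k) $$ (i,j))) \<le> c" .
      then have "\<bar>(1 / \<rho>) ^ k * (M ^\<^sub>m k) $$ (i,j)\<bar> \<le> c" by (simp only: norm_of_real)
      then have "(1 / \<rho>) ^ k * \<bar>(M ^\<^sub>m k) $$ (i,j)\<bar> \<le> c"
        using rpos by (simp add: abs_mult)
      then have "\<bar>(M ^\<^sub>m k) $$ (i,j)\<bar> \<le> c * \<rho> ^ k"
        using rpos by (simp add: field_simps power_divide)
      then show "\<bar>(M ^\<^sub>m k) $$ (i,j)\<bar> \<le> c * \<rho> ^ k" .
    qed
    then show ?thesis by blast
  qed
  show ?thesis by (rule gelfand[OF wpos Mc symM mu0 powbound])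
qed



lemma block_props:
  assumes Q: "partition_on {0..<n} Q" and x: "x < n"
  shows "block_of Q x \<in> Q" "x \<in> block_of Q x" "block_of Q x \<subseteq> {0..<n}"
proof -
  have un: "\<Union>Q = {0..<n}" and dj: "disjoint Q" using Q unfolding partition_on_def by auto
  have "x \<in> \<Union>Q" using x un by simp
  then obtain B where B: "B \<in> Q" "x \<in> B" by blast
  have uniq: "B' = B" if "B' \<in> Q" "x \<in> B'" for B'
  proof (rule ccontr)
    assume "B' \<noteq> B"
    then have "B' \<inter> B = {}" by (rule disjointD[OF dj that(1) B(1)])
    then show False using that(2) B(2) by blast
  qed
  have "block_of Q x = B" unfolding block_of_def
  proof (rule the_equality)
    show "B \<in> Q \<and> x \<in> B" using B by simp
    fix B' assume "B' \<in> Q \<and> x \<in> B'"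
    then show "B' = B" using uniq by blast
  qed
  then show bq: "block_of Q x \<in> Q" and "x \<in> block_of Q x" using B by auto
  have "block_of Q x \<subseteq> \<Union>Q" using bq by (rule Union_upper)
  then show "block_of Q x \<subseteq> {0..<n}" unfolding un .
qed

lemma block_same:
  assumes Q: "partition_on {0..<n} Q" and x: "x < n" and y: "y \<in> block_of Q x"
  shows "block_of Q y = block_of Q x"
proof -
  have dj: "disjoint Q" using Q unfolding partition_on_def by auto
  have "y \<in> {0..<n}" using block_props(3)[OF Q x] y by (rule subsetD)
  then have yn: "y < n" by simp
  have h1: "block_of Q y \<in> Q" and h2: "y \<in> block_of Q y" using block_props[OF Q yn] by auto
  have h3: "block_of Q x \<in> Q" using block_props[OF Q x] by auto
  show ?thesis
  proof (rule ccontr)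
    assume ne: "block_of Q y \<noteq> block_of Q x"
    have "block_of Q y \<inter> block_of Q x = {}" by (rule disjointD[OF dj h1 h3 ne])
    then show False using h2 y by blast
  qed
qed

definition rowstoch :: "nat \<Rightarrow> real mat \<Rightarrow> bool" where
  "rowstoch n K \<longleftrightarrow> (\<forall>i<n. (\<Sum>j<n. K $$ (i,j)) = 1)"
definition stationary :: "nat \<Rightarrow> (nat \<Rightarrow> real) \<Rightarrow> real mat \<Rightarrow> bool" where
  "stationary n w K \<longleftrightarrow> (\<forall>j<n. (\<Sum>i<n. w i * K $$ (i,j)) = w j)"

lemma gibbs_props:
  assumes pv: "prob_vec n \<pi>" and Q: "partition_on {0..<n} Q"
  defines "G \<equiv> gibbs_kernel n \<pi> Q"
  shows "G \<in> carrier_mat n n" "\<forall>i<n. \<forall>j<n. G $$ (i,j) \<ge> 0" "rowstoch n G"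
    "stationary n (\<lambda>i. \<pi> $ i) G"
proof -
  have pos: "\<forall>i<n. \<pi> $ i > 0" using pv unfolding prob_vec_def by auto
  show Gc: "G \<in> carrier_mat n n" unfolding G_def gibbs_kernel_def by simp
  have Gent: "G $$ (x,y) = (if y \<in> block_of Q x then \<pi> $ y / (\<Sum>z\<in>block_of Q x. \<pi> $ z) else 0)"
    if "x < n" "y < n" for x y
    unfolding G_def gibbs_kernel_def using that by simp
  have fin: "finite (block_of Q x)" if "x < n" for x
    using block_props(3)[OF Q that] by (rule finite_subset) simp
  have bpos: "(\<Sum>z\<in>block_of Q x. \<pi> $ z) > 0" if x: "x < n" for x
  proof -
    have "(\<Sum>z\<in>block_of Q x. \<pi> $ z) \<ge> \<pi> $ x"
      using block_props[OF Q x] pos fin[OF x]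
      by (intro member_le_sum) (auto simp: less_imp_le subset_iff)
    then show ?thesis using pos x by force
  qed
  show "\<forall>i<n. \<forall>j<n. G $$ (i,j) \<ge> 0"
  proof (intro allI impI)
    fix i j assume i: "i < n" and j: "j < n"
    have "\<pi> $ j / (\<Sum>z\<in>block_of Q i. \<pi> $ z) \<ge> 0" using pos j bpos[OF i] by (simp add: less_imp_le)
    then show "G $$ (i,j) \<ge> 0" unfolding Gent[OF i j] by simp
  qed
  show "rowstoch n G" unfolding rowstoch_def
  proof (intro allI impI)
    fix x assume x: "x < n"
    have sub: "block_of Q x \<subseteq> {..<n}" using block_props(3)[OF Q x] by auto
    have "(\<Sum>y<n. G $$ (x,y)) = (\<Sum>y<n. if y \<in> block_of Q x then \<pi> $ y / (\<Sum>z\<in>block_of Q x. \<pi> $ z) else 0)"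
      using Gent x by (intro sum.cong) auto
    also have "\<dots> = (\<Sum>y\<in>block_of Q x. \<pi> $ y / (\<Sum>z\<in>block_of Q x. \<pi> $ z))"
      using sub by (simp add: sum.If_cases Int_absorb1)
    also have "\<dots> = 1" using bpos[OF x] by (simp add: sum_divide_distrib[symmetric])
    finally show "(\<Sum>y<n. G $$ (x,y)) = 1" .
  qed
  show "stationary n (\<lambda>i. \<pi> $ i) G" unfolding stationary_def
  proof (intro allI impI)
    fix y assume y: "y < n"
    have sub: "block_of Q y \<subseteq> {..<n}" using block_props(3)[OF Q y] by auto
    have "(\<Sum>x<n. \<pi> $ x * G $$ (x,y)) = (\<Sum>x<n. if x \<in> block_of Q y then \<pi> $ x * (\<pi> $ y / (\<Sum>z\<in>block_of Q y. \<pi> $ z)) else 0)"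
    proof (intro sum.cong refl)
      fix x assume "x \<in> {..<n}"
      then have x: "x < n" by simp
      show "\<pi> $ x * G $$ (x,y) = (if x \<in> block_of Q y then \<pi> $ x * (\<pi> $ y / (\<Sum>z\<in>block_of Q y. \<pi> $ z)) else 0)"
      proof (cases "x \<in> block_of Q y")
        case True
        then have e: "block_of Q x = block_of Q y" by (rule block_same[OF Q y])
        then have "y \<in> block_of Q x" using block_props(2)[OF Q y] by simp
        then show ?thesis using Gent[OF x y] True e by simp
      next
        case False
        have "y \<notin> block_of Q x"
        proof
          assume "y \<in> block_of Q x"
          then have "block_of Q y = block_of Q x" by (rule block_same[OF Q x])
          then show False using False block_props(2)[OF Q x] by simp
        qed
        then show ?thesis using Gent[OF x y] False by simp
      qed
    qed
    also have "\<dots> = (\<Sum>x\<in>block_of Q y. \<pi> $ x * (\<pi> $ y / (\<Sum>z\<in>block_of Q y. \<pi> $ z)))"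
      using sub by (simp add: sum.If_cases Int_absorb1)
    also have "\<dots> = (\<Sum>x\<in>block_of Q y. \<pi> $ x) * (\<pi> $ y / (\<Sum>z\<in>block_of Q y. \<pi> $ z))"
      by (rule sum_distrib_right[symmetric])
    also have "\<dots> = \<pi> $ y" using bpos[OF y] by simp
    finally show "(\<Sum>x<n. \<pi> $ x * G $$ (x,y)) = \<pi> $ y" .
  qed
qed



lemma jensen_row:
  fixes K :: "real mat"
  assumes nn: "\<forall>j<n. K $$ (i,j) \<ge> 0" and rs: "(\<Sum>j<n. K $$ (i,j)) = 1"
  shows "(ap n K v i)\<^sup>2 \<le> (\<Sum>j<n. K $$ (i,j) * (v j)\<^sup>2)"
proof -
  define a where "a = ap n K v i"
  have "0 \<le> (\<Sum>j<n. K $$ (i,j) * (v j - a)\<^sup>2)" using nn by (intro sum_nonneg) auto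
  also have "\<dots> = (\<Sum>j<n. K $$ (i,j) * (v j)\<^sup>2) - 2 * a * (\<Sum>j<n. K $$ (i,j) * v j) + a\<^sup>2 * (\<Sum>j<n. K $$ (i,j))"
    by (simp add: power2_eq_square algebra_simps sum.distrib sum_subtractf sum_distrib_left sum_distrib_right)
  also have "\<dots> = (\<Sum>j<n. K $$ (i,j) * (v j)\<^sup>2) - a\<^sup>2"
    using rs unfolding a_def ap_def by (simp add: power2_eq_square)
  finally show ?thesis unfolding a_def by simp
qed

lemma jensen:
  fixes K :: "real mat"
  assumes wpos: "\<forall>i<n. w i > 0" and sum1: "(\<Sum>i<n. w i) = 1"
    and nn: "\<forall>i<n. \<forall>j<n. K $$ (i,j) \<ge> 0" and rs: "rowstoch n K" and st: "stationary n w K"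
  shows "nrm n w (\<lambda>i. ap n K v i - (\<Sum>j<n. w j * v j)) \<le> nrm n w v"
proof -
  define m where "m = (\<Sum>j<n. w j * v j)"
  have wa: "(\<Sum>i<n. w i * ap n K v i) = m"
  proof -
    have "(\<Sum>i<n. w i * ap n K v i) = (\<Sum>i<n. \<Sum>j<n. w i * K $$ (i,j) * v j)"
      unfolding ap_def by (simp add: sum_distrib_left mult.assoc)
    also have "\<dots> = (\<Sum>j<n. \<Sum>i<n. w i * K $$ (i,j) * v j)" by (rule sum.swap)
    also have "\<dots> = (\<Sum>j<n. (\<Sum>i<n. w i * K $$ (i,j)) * v j)" by (simp add: sum_distrib_right)
    also have "\<dots> = m" unfolding m_def using st unfolding stationary_def by simp
    finally show ?thesis .
  qed
  have "nsq n w (\<lambda>i. ap n K v i - m) = (\<Sum>i<n. w i * (ap n K v i)\<^sup>2) - 2 * m * (\<Sum>i<n. w i * ap n K v i) + m\<^sup>2 * (\<Sum>i<n. w i)"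
    unfolding nsq_def by (simp add: power2_eq_square algebra_simps sum.distrib sum_subtractf sum_distrib_left sum_distrib_right)
  also have "\<dots> = (\<Sum>i<n. w i * (ap n K v i)\<^sup>2) - m\<^sup>2" using wa sum1 by (simp add: power2_eq_square)
  also have "\<dots> \<le> (\<Sum>i<n. w i * (ap n K v i)\<^sup>2)" by simp
  also have "\<dots> \<le> (\<Sum>i<n. w i * (\<Sum>j<n. K $$ (i,j) * (v j)\<^sup>2))"
  proof (intro sum_mono)
    fix i assume "i \<in> {..<n}"
    then have i: "i < n" by simp
    have "(ap n K v i)\<^sup>2 \<le> (\<Sum>j<n. K $$ (i,j) * (v j)\<^sup>2)"
      using nn rs i unfolding rowstoch_def by (intro jensen_row) auto
    then show "w i * (ap n K v i)\<^sup>2 \<le> w i * (\<Sum>j<n. K $$ (i,j) * (v j)\<^sup>2)"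
      using wpos i by (intro mult_left_mono) auto
  qed
  also have "\<dots> = (\<Sum>i<n. \<Sum>j<n. w i * K $$ (i,j) * (v j)\<^sup>2)" by (simp add: sum_distrib_left mult.assoc)
  also have "\<dots> = (\<Sum>j<n. \<Sum>i<n. w i * K $$ (i,j) * (v j)\<^sup>2)" by (rule sum.swap)
  also have "\<dots> = (\<Sum>j<n. (\<Sum>i<n. w i * K $$ (i,j)) * (v j)\<^sup>2)" by (simp add: sum_distrib_right)
  also have "\<dots> = nsq n w v" unfolding nsq_def using st unfolding stationary_def by simp
  finally have "nsq n w (\<lambda>i. ap n K v i - m) \<le> nsq n w v" .
  then show ?thesis unfolding nrm_def m_def by (rule real_sqrt_le_mono)
qed

lemma frob_formula:
  assumes X: "X \<in> carrier_mat n n"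
  shows "frob_sq n \<pi> X = (\<Sum>i<n. nsq n (\<lambda>k. \<pi> $ k) (\<lambda>y. X $$ (y,i)) / \<pi> $ i)"
proof -
  have "frob_sq n \<pi> X = (\<Sum>i<n. (adjoint_pi n \<pi> X * X) $$ (i,i))"
    unfolding frob_sq_def mtrace_def ..
  also have "\<dots> = (\<Sum>i<n. \<Sum>k<n. \<pi> $ k * X $$ (k,i) / \<pi> $ i * X $$ (k,i))"
    using X by (intro sum.cong refl) (simp add: adjoint_pi_def scalar_prod_def atLeast0LessThan)
  also have "\<dots> = (\<Sum>i<n. nsq n (\<lambda>k. \<pi> $ k) (\<lambda>y. X $$ (y,i)) / \<pi> $ i)"
    unfolding nsq_def by (simp add: sum_divide_distrib power2_eq_square algebra_simps)
  finally show ?thesis .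
qed

lemma frob_mult_bound:
  assumes X: "X \<in> carrier_mat n n" and T: "T \<in> carrier_mat n n"
    and pos: "\<forall>i<n. \<pi> $ i > 0" and c0: "c0 \<ge> 0"
    and op: "\<And>v. nrm n (\<lambda>k. \<pi> $ k) (ap n T v) \<le> c0 * nrm n (\<lambda>k. \<pi> $ k) v"
  shows "frob_sq n \<pi> (T * X) \<le> c0\<^sup>2 * frob_sq n \<pi> X"
proof -
  let ?w = "\<lambda>k. \<pi> $ k"
  have wpos: "\<forall>i<n. ?w i > 0" using pos by simp
  have TX: "T * X \<in> carrier_mat n n" using T X by simp
  have col: "nsq n ?w (\<lambda>y. (T * X) $$ (y,i)) \<le> c0\<^sup>2 * nsq n ?w (\<lambda>y. X $$ (y,i))" if i: "i < n" for i
  proof -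
    have "nsq n ?w (\<lambda>y. (T * X) $$ (y,i)) = nsq n ?w (ap n T (\<lambda>j. X $$ (j,i)))"
      using T X i by (intro nsq_cong) (simp add: ap_def scalar_prod_def atLeast0LessThan)
    also have "\<dots> = (nrm n ?w (ap n T (\<lambda>j. X $$ (j,i))))\<^sup>2" using nrm_sq[OF wpos] by simp
    also have "\<dots> \<le> (c0 * nrm n ?w (\<lambda>j. X $$ (j,i)))\<^sup>2"
      using op nrm_nonneg[OF wpos] by (intro power_mono) auto
    also have "\<dots> = c0\<^sup>2 * nsq n ?w (\<lambda>j. X $$ (j,i))" using nrm_sq[OF wpos] by (simp add: power_mult_distrib)
    finally show ?thesis .
  qed
  have "frob_sq n \<pi> (T * X) = (\<Sum>i<n. nsq n ?w (\<lambda>y. (T * X) $$ (y,i)) / \<pi> $ i)"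
    by (rule frob_formula[OF TX])
  also have "\<dots> \<le> (\<Sum>i<n. c0\<^sup>2 * nsq n ?w (\<lambda>y. X $$ (y,i)) / \<pi> $ i)"
    using col pos by (intro sum_mono divide_right_mono) (auto simp: less_imp_le)
  also have "\<dots> = c0\<^sup>2 * frob_sq n \<pi> X"
    unfolding frob_formula[OF X] by (simp add: sum_distrib_left)
  finally show ?thesis .
qed



lemma stationary_pow:
  fixes A :: "real mat"
  assumes Ac: "A \<in> carrier_mat n n" and st: "stationary n w A"
  shows "stationary n w (A ^\<^sub>m k)"
proof (induction k)
  case 0
  show ?case unfolding stationary_def
  proof (intro allI impI)
    fix j assume j: "j < n"
    have "(\<Sum>i<n. w i * (A ^\<^sub>m 0) $$ (i,j)) = (\<Sum>i<n. if i = j then w i else 0)"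
      using Ac j by (intro sum.cong) auto
    then show "(\<Sum>i<n. w i * (A ^\<^sub>m 0) $$ (i,j)) = w j" using j by simp
  qed
next
  case (Suc k)
  show ?case unfolding stationary_def
  proof (intro allI impI)
    fix j assume j: "j < n"
    have "(\<Sum>i<n. w i * (A ^\<^sub>m Suc k) $$ (i,j)) = (\<Sum>i<n. \<Sum>m<n. w i * (A ^\<^sub>m k) $$ (i,m) * A $$ (m,j))"
      using Ac j by (intro sum.cong refl) (simp add: scalar_prod_def atLeast0LessThan sum_distrib_left mult.assoc)
    also have "\<dots> = (\<Sum>m<n. \<Sum>i<n. w i * (A ^\<^sub>m k) $$ (i,m) * A $$ (m,j))" by (rule sum.swap)
    also have "\<dots> = (\<Sum>m<n. (\<Sum>i<n. w i * (A ^\<^sub>m k) $$ (i,m)) * A $$ (m,j))" by (simp add: sum_distrib_right)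
    also have "\<dots> = (\<Sum>m<n. w m * A $$ (m,j))" using Suc unfolding stationary_def by simp
    also have "\<dots> = w j" using st j unfolding stationary_def by simp
    finally show "(\<Sum>i<n. w i * (A ^\<^sub>m Suc k) $$ (i,j)) = w j" .
  qed
qed

lemma pow_minus_Pi:
  fixes A :: "real mat"
  assumes Ac: "A \<in> carrier_mat n n" and rs: "rowstoch n A" and st: "stationary n (\<lambda>i. \<pi> $ i) A"
    and sum1: "(\<Sum>i<n. \<pi> $ i) = 1"
  shows "A ^\<^sub>m Suc k - Pi_mat n \<pi> = (A - Pi_mat n \<pi>) * (A ^\<^sub>m k - Pi_mat n \<pi>)"
proof (rule eq_matI)
  have Pic: "Pi_mat n \<pi> \<in> carrier_mat n n" unfolding Pi_mat_def by simp
  have Akc: "A ^\<^sub>m k \<in> carrier_mat n n" using Ac by simp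
  show "dim_row (A ^\<^sub>m Suc k - Pi_mat n \<pi>) = dim_row ((A - Pi_mat n \<pi>) * (A ^\<^sub>m k - Pi_mat n \<pi>))"
    "dim_col (A ^\<^sub>m Suc k - Pi_mat n \<pi>) = dim_col ((A - Pi_mat n \<pi>) * (A ^\<^sub>m k - Pi_mat n \<pi>))"
    using Ac Pic by auto
  fix i j assume "i < dim_row ((A - Pi_mat n \<pi>) * (A ^\<^sub>m k - Pi_mat n \<pi>))"
    "j < dim_col ((A - Pi_mat n \<pi>) * (A ^\<^sub>m k - Pi_mat n \<pi>))"
  then have i: "i < n" and j: "j < n" using Ac Pic by auto
  have stk: "(\<Sum>l<n. \<pi> $ l * (A ^\<^sub>m k) $$ (l,j)) = \<pi> $ j"
    using stationary_pow[OF Ac st, of k] j unfolding stationary_def by simp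
  have rsi: "(\<Sum>l<n. A $$ (i,l)) = 1" using rs i unfolding rowstoch_def by simp
  have AS: "A ^\<^sub>m Suc k = A * A ^\<^sub>m k"
  proof -
    have "A ^\<^sub>m Suc k = A ^\<^sub>m (1 + k)" by simp
    also have "\<dots> = A ^\<^sub>m 1 * A ^\<^sub>m k" by (rule pow_mat_add[OF Ac])
    finally show ?thesis using Ac by simp
  qed
  have "((A - Pi_mat n \<pi>) * (A ^\<^sub>m k - Pi_mat n \<pi>)) $$ (i,j)
      = (\<Sum>l<n. (A $$ (i,l) - \<pi> $ l) * ((A ^\<^sub>m k) $$ (l,j) - \<pi> $ j))"
    using Ac Pic i j by (simp add: scalar_prod_def atLeast0LessThan Pi_mat_def)
  also have "\<dots> = (\<Sum>l<n. A $$ (i,l) * (A ^\<^sub>m k) $$ (l,j)) - \<pi> $ j * (\<Sum>l<n. A $$ (i,l))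
      - (\<Sum>l<n. \<pi> $ l * (A ^\<^sub>m k) $$ (l,j)) + \<pi> $ j * (\<Sum>l<n. \<pi> $ l)"
    by (simp add: algebra_simps sum.distrib sum_subtractf sum_distrib_left)
  also have "\<dots> = (\<Sum>l<n. A $$ (i,l) * (A ^\<^sub>m k) $$ (l,j)) - \<pi> $ j"
    using stk rsi sum1 by simp
  also have "(\<Sum>l<n. A $$ (i,l) * (A ^\<^sub>m k) $$ (l,j)) = (A ^\<^sub>m Suc k) $$ (i,j)"
    unfolding AS using Ac i j by (simp add: scalar_prod_def atLeast0LessThan)
  finally show "(A ^\<^sub>m Suc k - Pi_mat n \<pi>) $$ (i,j) = ((A - Pi_mat n \<pi>) * (A ^\<^sub>m k - Pi_mat n \<pi>)) $$ (i,j)"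
    using Ac Pic i j by (simp add: Pi_mat_def)
qed

theorem proposition4p11:
  fixes n :: nat and \<pi> :: "real vec" and P :: "real mat" and Q :: "nat set set"
    and l :: nat and \<alpha> :: real
  assumes "prob_vec n \<pi>"
    and "transition_mat n P"
    and "reversible n \<pi> P"
    and "partition_on {0..<n} Q"
    and "l \<ge> 2"
    and "0 < \<alpha>" and "\<alpha> < 1"
  shows "let A = \<alpha> \<cdot>\<^sub>m P + (1 - \<alpha>) \<cdot>\<^sub>m gibbs_kernel n \<pi> Q in
         frob_sq n \<pi> (A ^\<^sub>m l - Pi_mat n \<pi>)
           \<le> (1 - \<alpha> * abs_spectral_gap n P) ^ (2 * (l - 1)) * frob_sq n \<pi> (A - Pi_mat n \<pi>)"
proof -
  note pv = assms(1) and tm = assms(2) and rev = assms(3) and Qp = assms(4)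
  define w where "w = (\<lambda>i. \<pi> $ i)"
  define G where "G = gibbs_kernel n \<pi> Q"
  define A where "A = \<alpha> \<cdot>\<^sub>m P + (1 - \<alpha>) \<cdot>\<^sub>m G"
  define Pi where "Pi = Pi_mat n \<pi>"
  define T where "T = A - Pi"
  define \<mu> where "\<mu> = max \<bar>lambda2 n P\<bar> \<bar>lambda_min n P\<bar>"
  define c0 where "c0 = 1 - \<alpha> * abs_spectral_gap n P"
  have c0mu: "c0 = \<alpha> * \<mu> + (1 - \<alpha>)" unfolding c0_def \<mu>_def abs_spectral_gap_def by (simp add: algebra_simps)
  have mu0: "\<mu> \<ge> 0" unfolding \<mu>_def by simp
  have c00: "c0 \<ge> 0" unfolding c0mu using mu0 assms(6,7) by simp
  have pos: "\<forall>i<n. \<pi> $ i > 0" and sum1: "(\<Sum>i<n. \<pi> $ i) = 1"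
    using pv unfolding prob_vec_def by auto
  have wpos: "\<forall>i<n. w i > 0" using pos unfolding w_def by simp
  have Pc: "P \<in> carrier_mat n n" and Pnn: "\<forall>i<n. \<forall>j<n. P $$ (i,j) \<ge> 0" and Prs: "rowstoch n P"
    using tm unfolding transition_mat_def rowstoch_def by auto
  have Pst: "stationary n w P" unfolding stationary_def
  proof (intro allI impI)
    fix j assume j: "j < n"
    have "(\<Sum>i<n. w i * P $$ (i,j)) = (\<Sum>i<n. w j * P $$ (j,i))"
      using rev j unfolding reversible_def w_def by (intro sum.cong) auto
    also have "\<dots> = w j" using Prs j unfolding rowstoch_def by (simp add: sum_distrib_left[symmetric])
    finally show "(\<Sum>i<n. w i * P $$ (i,j)) = w j" .
  qed
  have Gc: "G \<in> carrier_mat n n" and Gnn: "\<forall>i<n. \<forall>j<n. G $$ (i,j) \<ge> 0" and Grs: "rowstoch n G"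
    and Gst: "stationary n w G"
    using gibbs_props[OF pv Qp] unfolding G_def w_def by auto
  have Ac: "A \<in> carrier_mat n n" unfolding A_def using Pc Gc by simp
  have Pic: "Pi \<in> carrier_mat n n" unfolding Pi_def Pi_mat_def by simp
  have Tc: "T \<in> carrier_mat n n" unfolding T_def by (rule minus_carrier_mat[OF Pic])
  have Aent: "A $$ (i,j) = \<alpha> * P $$ (i,j) + (1 - \<alpha>) * G $$ (i,j)" if "i < n" "j < n" for i j
    unfolding A_def using Pc Gc that by simp
  have Ars: "rowstoch n A" unfolding rowstoch_def
  proof (intro allI impI)
    fix i assume i: "i < n"
    have "(\<Sum>j<n. A $$ (i,j)) = \<alpha> * (\<Sum>j<n. P $$ (i,j)) + (1 - \<alpha>) * (\<Sum>j<n. G $$ (i,j))"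
      using Aent i by (simp add: sum.distrib sum_distrib_left)
    then show "(\<Sum>j<n. A $$ (i,j)) = 1" using Prs Grs i unfolding rowstoch_def by simp
  qed
  have Ast: "stationary n w A" unfolding stationary_def
  proof (intro allI impI)
    fix j assume j: "j < n"
    have "(\<Sum>i<n. w i * A $$ (i,j)) = (\<Sum>i<n. \<alpha> * (w i * P $$ (i,j)) + (1 - \<alpha>) * (w i * G $$ (i,j)))"
    proof (intro sum.cong refl)
      fix x assume "x \<in> {..<n}"
      then have e: "A $$ (x,j) = \<alpha> * P $$ (x,j) + (1 - \<alpha>) * G $$ (x,j)" using Aent j by simp
      show "w x * A $$ (x,j) = \<alpha> * (w x * P $$ (x,j)) + (1 - \<alpha>) * (w x * G $$ (x,j))"
        unfolding e by (simp add: algebra_simps)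
    qed
    also have "\<dots> = \<alpha> * (\<Sum>i<n. w i * P $$ (i,j)) + (1 - \<alpha>) * (\<Sum>i<n. w i * G $$ (i,j))"
      by (simp add: sum.distrib sum_distrib_left)
    finally have "(\<Sum>i<n. w i * A $$ (i,j)) = \<alpha> * (\<Sum>i<n. w i * P $$ (i,j)) + (1 - \<alpha>) * (\<Sum>i<n. w i * G $$ (i,j))" .
    then show "(\<Sum>i<n. w i * A $$ (i,j)) = w j" using Pst Gst j unfolding stationary_def by (simp add: algebra_simps)
  qed
  have op: "nrm n w (ap n T v) \<le> c0 * nrm n w v" for v
  proof -
    define m where "m = (\<Sum>j<n. w j * v j)"
    have apT: "ap n T v i = \<alpha> * ap n (P - Pi_mat n \<pi>) v i + (1 - \<alpha>) * (ap n G v i - m)" if i: "i < n" for i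
    proof -
      have h1: "ap n T v i = (\<Sum>j<n. (\<alpha> * P $$ (i,j) + (1 - \<alpha>) * G $$ (i,j) - \<pi> $ j) * v j)"
        unfolding ap_def T_def Pi_def using Aent Ac Pic i by (intro sum.cong refl) (simp add: Pi_mat_def)
      have h1': "(\<Sum>j<n. (\<alpha> * P $$ (i,j) + (1 - \<alpha>) * G $$ (i,j) - \<pi> $ j) * v j)
          = \<alpha> * (\<Sum>j<n. P $$ (i,j) * v j) + (1 - \<alpha>) * (\<Sum>j<n. G $$ (i,j) * v j) - (\<Sum>j<n. \<pi> $ j * v j)"
        by (simp add: algebra_simps sum.distrib sum_subtractf sum_distrib_left)
      have h2: "ap n (P - Pi_mat n \<pi>) v i = (\<Sum>j<n. (P $$ (i,j) - \<pi> $ j) * v j)"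
        unfolding ap_def using Pc i by (intro sum.cong refl) (simp add: Pi_mat_def)
      have h2': "(\<Sum>j<n. (P $$ (i,j) - \<pi> $ j) * v j) = (\<Sum>j<n. P $$ (i,j) * v j) - (\<Sum>j<n. \<pi> $ j * v j)"
        by (simp add: algebra_simps sum_subtractf)
      have h3: "ap n G v i = (\<Sum>j<n. G $$ (i,j) * v j)" unfolding ap_def ..
      have h4: "m = (\<Sum>j<n. \<pi> $ j * v j)" unfolding m_def w_def ..
      show ?thesis unfolding h1 h1' h2 h2' h3 h4 by (simp add: algebra_simps)
    qed
    have "nrm n w (ap n T v) = nrm n w (\<lambda>i. \<alpha> * ap n (P - Pi_mat n \<pi>) v i + (1 - \<alpha>) * (ap n G v i - m))"
      using apT by (rule nrm_cong)
    also have "\<dots> \<le> nrm n w (\<lambda>i. \<alpha> * ap n (P - Pi_mat n \<pi>) v i) + nrm n w (\<lambda>i. (1 - \<alpha>) * (ap n G v i - m))"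
      by (rule nrm_triangle[OF wpos])
    also have "\<dots> = \<alpha> * nrm n w (ap n (P - Pi_mat n \<pi>) v) + (1 - \<alpha>) * nrm n w (\<lambda>i. ap n G v i - m)"
      using nrm_scale[of n w \<alpha> "ap n (P - Pi_mat n \<pi>) v"] nrm_scale[of n w "1 - \<alpha>" "\<lambda>i. ap n G v i - m"]
        assms(6,7) by simp
    also have "\<dots> \<le> \<alpha> * (\<mu> * nrm n w v) + (1 - \<alpha>) * nrm n w v"
    proof (intro add_mono mult_left_mono)
      show "nrm n w (ap n (P - Pi_mat n \<pi>) v) \<le> \<mu> * nrm n w v"
        unfolding w_def \<mu>_def by (rule spectral_main[OF pv tm rev])
      show "nrm n w (\<lambda>i. ap n G v i - m) \<le> nrm n w v"
        unfolding m_def by (rule jensen[OF wpos sum1[folded w_def] Gnn Grs Gst])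
    qed (use assms(6,7) in auto)
    also have "\<dots> = c0 * nrm n w v" unfolding c0mu by (simp add: algebra_simps)
    finally show ?thesis .
  qed
  have step: "frob_sq n \<pi> (A ^\<^sub>m Suc k - Pi) \<le> c0\<^sup>2 * frob_sq n \<pi> (A ^\<^sub>m k - Pi)" for k
  proof -
    have "A ^\<^sub>m Suc k - Pi = T * (A ^\<^sub>m k - Pi)"
      unfolding T_def Pi_def by (rule pow_minus_Pi[OF Ac Ars Ast[unfolded w_def] sum1])
    moreover have "frob_sq n \<pi> (T * (A ^\<^sub>m k - Pi)) \<le> c0\<^sup>2 * frob_sq n \<pi> (A ^\<^sub>m k - Pi)"
      by (rule frob_mult_bound[OF _ Tc pos c00 op[unfolded w_def]]) (use Ac Pic in auto)
    ultimately show ?thesis by simp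
  qed
  have ind: "frob_sq n \<pi> (A ^\<^sub>m Suc k - Pi) \<le> c0 ^ (2 * k) * frob_sq n \<pi> (A - Pi)" for k
  proof (induction k)
    case 0
    have "A ^\<^sub>m Suc 0 = A" using Ac by simp
    then show ?case by simp
  next
    case (Suc k)
    have "frob_sq n \<pi> (A ^\<^sub>m Suc (Suc k) - Pi) \<le> c0\<^sup>2 * frob_sq n \<pi> (A ^\<^sub>m Suc k - Pi)" by (rule step)
    also have "\<dots> \<le> c0\<^sup>2 * (c0 ^ (2 * k) * frob_sq n \<pi> (A - Pi))"
      using Suc by (intro mult_left_mono) auto
    also have "\<dots> = c0 ^ (2 * Suc k) * frob_sq n \<pi> (A - Pi)"
    proof -
      have "c0 ^ (2 * Suc k) = c0\<^sup>2 * c0 ^ (2 * k)" by (simp add: power2_eq_square)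
      then show ?thesis by (simp only: mult.assoc)
    qed
    finally show ?case .
  qed
  obtain k where lk: "l = Suc k" using assms(5) by (cases l) auto
  have "frob_sq n \<pi> (A ^\<^sub>m l - Pi) \<le> c0 ^ (2 * (l - 1)) * frob_sq n \<pi> (A - Pi)"
    unfolding lk using ind[of k] by simp
  then show ?thesis unfolding Let_def A_def G_def Pi_def c0_def .
qed

end
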